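(* With $Y^+$ as in the context, $$m(Y^+)=(-1)^{\frac{p-1}{2}}\cdot\frac{p-1}{2},\qquad \#\mathrm{BF}(Y^+)_{\rm tors}=p,\qquad g_{Y^+}^*(1)=(-1)^{\frac{p-1}{2}}\cdot\frac{p-1}{2}\cdot p.$$
   Context: Let $p$ be an odd prime, $\Delta=\mathrm{Gal}(\mathbb{Q}(\zeta_p)/\mathbb{Q})$, $\sigma_i:\zeta_p\mapsto\zeta_p^i$, $j=\sigma_{-1}$. Digraphs have incidence $e\mapsto(o(e),t(e))$; the derived digraph $X(G,\alpha)$ of $\alpha:E_X\to G$ has vertices $V_X\times G$, edges $E_X\times G$, $o(e,\sigma)=(o(e),\sigma)$, $t(e,\sigma)=(t(e),\sigma\alpha(e))$, with $G$ acting by left multiplication on the second coordinate. $X$ is the bouquet with $\frac{p-1}{2}p+1$ loops $e_0$, $e_{i,k}$ ($1\le k\le i\le p-1$), $\alpha(e_0)=\sigma_1$, $\alpha(e_{i,k})=\sigma_i^{-1}$, $Y=X(\Delta,\alpha)$, and $Y^+=Y_{\langle j\rangle}$ the quotient digraph. For a finite digraph $W$: $\mathcal{A}_W(w)=\sum_{o(\varepsilon)=w}t(\varepsilon)$, $\mathrm{BF}(W)=\mathrm{coker}(\mathcal{I}-\mathcal{A}_W)$, $g_W(u)=\det(\mathcal{I}-\mathcal{A}_Wu)$, $r_W=\mathrm{ord}_{u=1}g_W$, $g_W^*(1)$ the coefficient of $(u-1)^{r_W}$ in the Taylor expansion at $1$, and (when $r_W=\mathrm{rank}_{\mathbb{Z}}\mathrm{BF}(W)$)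 $m(W)=g_W^*(1)/\#\mathrm{BF}(W)_{\rm tors}$, a nonzero integer. *)

theory Defs
  imports "HOL-Combinatorics.Permutations" "HOL-Computational_Algebra.Polynomial" "Graph_Theory.Digraph"
begin

text \<open>sigma_i (zeta_p to zeta_p^i) is represented by its index i in {1..p-1};
  composition sigma_a sigma_b = sigma_(a b mod p).\<close>

definition Delta :: "nat \<Rightarrow> nat set" where
  "Delta p = {1..<p}"

definition dmul :: "nat \<Rightarrow> nat \<Rightarrow> nat \<Rightarrow> nat" where
  "dmul p a b = (a * b) mod p"

definition dinv :: "nat \<Rightarrow> nat \<Rightarrow> nat" where
  "dinv p a = (THE b. b \<in> Delta p \<and> dmul p a b = 1)"

text \<open>The subgroup generated by j = sigma_(-1).\<close>
definition jgrp :: "nat \<Rightarrow> nat set" where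
  "jgrp p = {1, p - 1}"

definition derived :: "('v, 'e) pre_digraph \<Rightarrow> 'g set \<Rightarrow> ('g \<Rightarrow> 'g \<Rightarrow> 'g) \<Rightarrow> ('e \<Rightarrow> 'g)
    \<Rightarrow> ('v \<times> 'g, 'e \<times> 'g) pre_digraph" where
  "derived X G mul \<alpha> =
     \<lparr> verts = verts X \<times> G, arcs = arcs X \<times> G,
       tail = (\<lambda>(e, \<sigma>). (tail X e, \<sigma>)),
       head = (\<lambda>(e, \<sigma>). (head X e, mul \<sigma> (\<alpha> e))) \<rparr>"

definition lorbit :: "'g set \<Rightarrow> ('g \<Rightarrow> 'g \<Rightarrow> 'g) \<Rightarrow> 'a \<times> 'g \<Rightarrow> ('a \<times> 'g) set" where
  "lorbit H mul x = {(fst x, mul \<tau> (snd x)) | \<tau>. \<tau> \<in> H}"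

definition quot :: "('v \<times> 'g, 'e \<times> 'g) pre_digraph \<Rightarrow> 'g set \<Rightarrow> ('g \<Rightarrow> 'g \<Rightarrow> 'g)
    \<Rightarrow> (('v \<times> 'g) set, ('e \<times> 'g) set) pre_digraph" where
  "quot Y H mul =
     \<lparr> verts = lorbit H mul ` verts Y, arcs = lorbit H mul ` arcs Y,
       tail = (\<lambda>E. lorbit H mul (tail Y (SOME \<epsilon>. \<epsilon> \<in> E))),
       head = (\<lambda>E. lorbit H mul (head Y (SOME \<epsilon>. \<epsilon> \<in> E))) \<rparr>"

datatype xedge = E0 | Eik nat nat

definition X_edges :: "nat \<Rightarrow> xedge set" where
  "X_edges p = insert E0 {Eik i k | i k. 1 \<le> k \<and> k \<le> i \<and> i \<le> p - 1}"

definition Xb :: "nat \<Rightarrow> (unit, xedge) pre_digraph" where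
  "Xb p = \<lparr> verts = {()}, arcs = X_edges p, tail = (\<lambda>_. ()), head = (\<lambda>_. ()) \<rparr>"

definition alpha :: "nat \<Rightarrow> xedge \<Rightarrow> nat" where
  "alpha p e = (case e of E0 \<Rightarrow> 1 | Eik i k \<Rightarrow> dinv p i)"

definition Yd :: "nat \<Rightarrow> (unit \<times> nat, xedge \<times> nat) pre_digraph" where
  "Yd p = derived (Xb p) (Delta p) (dmul p) (alpha p)"

definition Yplus :: "nat \<Rightarrow> ((unit \<times> nat) set, (xedge \<times> nat) set) pre_digraph" where
  "Yplus p = quot (Yd p) (jgrp p) (dmul p)"

text \<open>Elements of Z[V] are functions V -> int vanishing outside V.\<close>
definition ZV :: "('v, 'e) pre_digraph \<Rightarrow> ('v \<Rightarrow> int) set" where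
  "ZV W = {f. \<forall>x. x \<notin> verts W \<longrightarrow> f x = 0}"

text \<open>A_W(sum_w f(w) w) = sum_w f(w) sum_(o(eps)=w) t(eps), as a function of v.\<close>
definition adj :: "('v, 'e) pre_digraph \<Rightarrow> ('v \<Rightarrow> int) \<Rightarrow> ('v \<Rightarrow> int)" where
  "adj W f = (\<lambda>v. \<Sum>\<epsilon>\<in>{\<epsilon> \<in> arcs W. head W \<epsilon> = v}. f (tail W \<epsilon>))"

definition BF_lattice :: "('v, 'e) pre_digraph \<Rightarrow> ('v \<Rightarrow> int) set" where
  "BF_lattice W = (\<lambda>f. (\<lambda>v. f v - adj W f v)) ` ZV W"

text \<open>BF(W) = coker(I - A_W) = Z[V] / (I - A_W) Z[V], as a set of cosets.\<close>
definition BF :: "('v, 'e) pre_digraph \<Rightarrow> ('v \<Rightarrow> int) set set" where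
  "BF W = ZV W // {(f, g). f \<in> ZV W \<and> g \<in> ZV W \<and> f - g \<in> BF_lattice W}"

definition BF_tors :: "('v, 'e) pre_digraph \<Rightarrow> ('v \<Rightarrow> int) set set" where
  "BF_tors W = {c \<in> BF W. \<exists>n::int. n > 0 \<and> (\<exists>f\<in>c. (\<lambda>v. n * f v) \<in> BF_lattice W)}"

definition BF_indep :: "('v, 'e) pre_digraph \<Rightarrow> ('v \<Rightarrow> int) set set \<Rightarrow> bool" where
  "BF_indep W S = (\<forall>c :: ('v \<Rightarrow> int) set \<Rightarrow> int.
      (\<lambda>v. \<Sum>s\<in>S. c s * (SOME f. f \<in> s) v) \<in> BF_lattice W \<longrightarrow> (\<forall>s\<in>S. c s = 0))"

definition BF_rank :: "('v, 'e) pre_digraph \<Rightarrow> nat" where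
  "BF_rank W = Max {card S | S. S \<subseteq> BF W \<and> finite S \<and> BF_indep W S}"

text \<open>Matrix of I - A_W u: entry (w, v) is the coefficient of v in the image of w.\<close>
definition IAu :: "('v, 'e) pre_digraph \<Rightarrow> 'v \<Rightarrow> 'v \<Rightarrow> int poly" where
  "IAu W w v = (if w = v then 1 else 0)
      - [:0, 1:] * of_nat (card {\<epsilon> \<in> arcs W. tail W \<epsilon> = w \<and> head W \<epsilon> = v})"

text \<open>g_W(u) = det(I - A_W u), Leibniz formula over the vertex set.\<close>
definition zeta_poly :: "('v, 'e) pre_digraph \<Rightarrow> int poly" where
  "zeta_poly W = (\<Sum>\<pi> \<in> {\<pi>. \<pi> permutes verts W}.
      of_int (sign \<pi>) * (\<Prod>w\<in>verts W. IAu W w (\<pi> w)))"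

definition r_ord :: "('v, 'e) pre_digraph \<Rightarrow> nat" where
  "r_ord W = order 1 (zeta_poly W)"

text \<open>Coefficient of (u-1)^r in the Taylor expansion of g_W at 1.\<close>
definition gstar :: "('v, 'e) pre_digraph \<Rightarrow> int" where
  "gstar W = coeff (pcompose (zeta_poly W) [:1, 1:]) (r_ord W)"

definition mval :: "('v, 'e) pre_digraph \<Rightarrow> rat" where
  "mval W = of_int (gstar W) / of_nat (card (BF_tors W))"

end

theory Submission
  imports Defs "HOL-Number_Theory.Cong"
begin


lemma permutation_of_permutes_fin: "finite U \<Longrightarrow> \<pi> permutes U \<Longrightarrow> permutation \<pi>"
  using permutes_imp_permutation by blast

lemma sum_sign_permutes:
  assumes "finite U"
  shows "(\<Sum>\<pi>\<in>{\<pi>. \<pi> permutes U}. sign \<pi>) = (if card U \<le> 1 then 1 else (0::int))"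
proof (cases "card U \<le> 1")
  case True
  then have "U = {} \<or> (\<exists>u. U = {u})" using assms
    by (metis card_0_eq card_1_singletonE le_Suc_eq One_nat_def le_zero_eq)
  then have "{\<pi>. \<pi> permutes U} = {id}" by auto
  then show ?thesis using True by (simp add: sign_id)
next
  case False
  then obtain a b where ab: "a \<in> U" "b \<in> U" "a \<noteq> b"
    using card_le_Suc0_iff_eq[OF assms] by auto
  let ?t = "transpose a b"
  let ?P = "{\<pi>. \<pi> permutes U}"
  have tp: "?t permutes U" using ab permutes_swap_id by metis
  have "(\<Sum>\<pi>\<in>?P. sign \<pi>) = (\<Sum>\<pi>\<in>?P. sign (?t \<circ> \<pi>))"
    by (rule sum.reindex_bij_witness[where i="\<lambda>\<pi>. ?t \<circ> \<pi>" and j="\<lambda>\<pi>. ?t \<circ> \<pi>"])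
       (auto simp: comp_assoc[symmetric] intro: permutes_compose[OF _ tp])
  also have "\<dots> = (\<Sum>\<pi>\<in>?P. - sign \<pi>)"
  proof (rule sum.cong)
    fix \<pi> assume "\<pi> \<in> ?P"
    then have "permutation \<pi>" using assms permutes_imp_permutation by blast
    moreover have "permutation ?t" using tp assms permutes_imp_permutation by blast
    ultimately show "sign (?t \<circ> \<pi>) = - sign \<pi>" using ab by (simp add: sign_compose sign_swap_id)
  qed simp
  also have "\<dots> = - (\<Sum>\<pi>\<in>?P. sign \<pi>)" by (simp add: sum_negf)
  finally show ?thesis using False by simp
qed

lemma permutes_fix_iff:
  assumes "T \<subseteq> V"
  shows "{\<pi>. \<pi> permutes V \<and> (\<forall>w\<in>T. \<pi> w = w)} = {\<pi>. \<pi> permutes (V - T)}"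
proof -
  have "\<pi> permutes V \<and> (\<forall>w\<in>T. \<pi> w = w) \<longleftrightarrow> \<pi> permutes (V - T)" for \<pi>
  proof
    assume h: "\<pi> permutes V \<and> (\<forall>w\<in>T. \<pi> w = w)"
    then show "\<pi> permutes (V - T)" unfolding permutes_def by (metis Diff_iff)
  next
    assume h: "\<pi> permutes (V - T)"
    then have "\<pi> permutes V" using permutes_subset by blast
    moreover have "\<forall>w\<in>T. \<pi> w = w" using h unfolding permutes_def by blast
    ultimately show "\<pi> permutes V \<and> (\<forall>w\<in>T. \<pi> w = w)" by blast
  qed
  then show ?thesis by blast
qed

lemma prod_if_fix:
  assumes "finite T"
  shows "(\<Prod>w\<in>T. (if \<pi> w = w then a else (0::'a::comm_ring_1)))
     = (if (\<forall>w\<in>T. \<pi> w = w) then a ^ card T else 0)"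
proof (cases "\<forall>w\<in>T. \<pi> w = w")
  case True
  then show ?thesis by simp
next
  case False
  then have "\<exists>w\<in>T. (if \<pi> w = w then a else 0) = 0" by auto
  then have "(\<Prod>w\<in>T. (if \<pi> w = w then a else (0::'a))) = 0" by (rule prod_zero[OF assms])
  then show ?thesis unfolding if_not_P[OF False] .
qed

lemma det_aIbJ:
  fixes a b :: "'a::comm_ring_1"
  assumes fin: "finite V"
  shows "(\<Sum>\<pi>\<in>{\<pi>. \<pi> permutes V}. of_int (sign \<pi>) * (\<Prod>w\<in>V. (if \<pi> w = w then a else 0) + b))
       = a ^ card V + of_nat (card V) * a ^ (card V - 1) * b"
proof -
  let ?P = "{\<pi>. \<pi> permutes V}"
  have finP: "finite ?P" using fin finite_permutations by blast
  have "(\<Sum>\<pi>\<in>?P. of_int (sign \<pi>) * (\<Prod>w\<in>V. (if \<pi> w = w then a else 0) + b))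
     = (\<Sum>\<pi>\<in>?P. of_int (sign \<pi>) * (\<Sum>T\<in>Pow V. (if (\<forall>w\<in>T. \<pi> w = w) then a ^ card T else 0) * b ^ card (V - T)))"
  proof (rule sum.cong[OF refl])
    fix \<pi> assume "\<pi> \<in> ?P"
    have "(\<Prod>w\<in>V. (if \<pi> w = w then a else 0) + b)
       = (\<Sum>T\<in>Pow V. (\<Prod>w\<in>T. (if \<pi> w = w then a else 0)) * (\<Prod>w\<in>V - T. b))"
      by (rule prod_add[OF fin])
    also have "\<dots> = (\<Sum>T\<in>Pow V. (if (\<forall>w\<in>T. \<pi> w = w) then a ^ card T else 0) * b ^ card (V - T))"
      apply (rule sum.cong[OF refl])
      using fin by (subst prod_if_fix) (auto intro: finite_subset)
    finally show "of_int (sign \<pi>) * (\<Prod>w\<in>V. (if \<pi> w = w then a else 0) + b)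
      = of_int (sign \<pi>) * (\<Sum>T\<in>Pow V. (if (\<forall>w\<in>T. \<pi> w = w) then a ^ card T else 0) * b ^ card (V - T))"
      by simp
  qed
  also have "\<dots> = (\<Sum>T\<in>Pow V. (\<Sum>\<pi>\<in>?P. of_int (sign \<pi>) * ((if (\<forall>w\<in>T. \<pi> w = w) then a ^ card T else 0) * b ^ card (V - T))))"
    by (subst sum.swap) (simp add: sum_distrib_left)
  also have "\<dots> = (\<Sum>T\<in>Pow V. of_int (\<Sum>\<pi>\<in>{\<pi>. \<pi> permutes (V - T)}. sign \<pi>) * (a ^ card T * b ^ card (V - T)))"
  proof (rule sum.cong[OF refl])
    fix T assume T: "T \<in> Pow V"
    have "(\<Sum>\<pi>\<in>?P. of_int (sign \<pi>) * ((if (\<forall>w\<in>T. \<pi> w = w) then a ^ card T else 0) * b ^ card (V - T)))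
        = (\<Sum>\<pi>\<in>?P. if (\<forall>w\<in>T. \<pi> w = w) then of_int (sign \<pi>) * (a ^ card T * b ^ card (V - T)) else 0)"
      by (rule sum.cong) auto
    also have "\<dots> = (\<Sum>\<pi>\<in>{\<pi>\<in>?P. (\<forall>w\<in>T. \<pi> w = w)}. of_int (sign \<pi>) * (a ^ card T * b ^ card (V - T)))"
      by (rule sum.inter_filter[OF finP, symmetric])
    also have "{\<pi>\<in>?P. (\<forall>w\<in>T. \<pi> w = w)} = {\<pi>. \<pi> permutes (V - T)}"
      using permutes_fix_iff[of T V] T by auto
    finally show "(\<Sum>\<pi>\<in>?P. of_int (sign \<pi>) * ((if (\<forall>w\<in>T. \<pi> w = w) then a ^ card T else 0) * b ^ card (V - T)))
       = of_int (\<Sum>\<pi>\<in>{\<pi>. \<pi> permutes (V - T)}. sign \<pi>) * (a ^ card T * b ^ card (V - T))"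
      by (simp add: sum_distrib_right of_int_sum)
  qed
  also have "\<dots> = (\<Sum>T\<in>Pow V. (if card (V - T) \<le> 1 then a ^ card T * b ^ card (V - T) else 0))"
    apply (rule sum.cong[OF refl])
    using fin by (subst sum_sign_permutes) auto
  also have "\<dots> = (\<Sum>U\<in>Pow V. (if card U \<le> 1 then a ^ card (V - U) * b ^ card U else 0))"
  proof (rule sum.reindex_bij_witness[where i="\<lambda>T. V - T" and j="\<lambda>T. V - T"])
    fix T assume "T \<in> Pow V"
    then have "V - (V - T) = T" by auto
    then show "(if card (V - T) \<le> 1 then a ^ card (V - (V - T)) * b ^ card (V - T) else 0)
      = (if card (V - T) \<le> 1 then a ^ card T * b ^ card (V - T) else 0)" by simp
  qed auto
  also have "\<dots> = (\<Sum>U\<in>{U\<in>Pow V. card U \<le> 1}. a ^ card (V - U) * b ^ card U)"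
    by (rule sum.inter_filter[OF finite_Pow_iff[THEN iffD2, OF fin], symmetric])
  also have "{U\<in>Pow V. card U \<le> 1} = insert {} ((\<lambda>v. {v}) ` V)"
  proof -
    have "card U \<le> 1 \<longleftrightarrow> U = {} \<or> (\<exists>v. U = {v})" if "U \<subseteq> V" for U
    proof -
      have fU: "finite U" using that fin finite_subset by blast
      show ?thesis
      proof
        assume "card U \<le> 1"
        then show "U = {} \<or> (\<exists>v. U = {v})"
          using fU by (metis One_nat_def card_0_eq card_1_singletonE le_Suc_eq le_zero_eq)
      qed auto
    qed
    then show ?thesis by auto
  qed
  also have "(\<Sum>U\<in>insert {} ((\<lambda>v. {v}) ` V). a ^ card (V - U) * b ^ card U)
     = a ^ card V + (\<Sum>U\<in>(\<lambda>v. {v}) ` V. a ^ card (V - U) * b ^ card U)"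
    using fin by (subst sum.insert) auto
  also have "(\<Sum>U\<in>(\<lambda>v. {v}) ` V. a ^ card (V - U) * b ^ card U) = (\<Sum>v\<in>V. a ^ card (V - {v}) * b)"
    by (subst sum.reindex) (auto simp: inj_on_def)
  also have "\<dots> = (\<Sum>v\<in>V. a ^ (card V - 1) * b)"
    using fin by (intro sum.cong) auto
  finally show ?thesis by simp
qed


lemma pcompose_power': "pcompose (p ^ k) r = (pcompose p r) ^ k"
  by (induction k) (simp_all add: pcompose_mult pcompose_1)

lemma neg_lin_power: "([:1,-1:] :: int poly) ^ k = smult ((-1)^k) ([:-1,1:] ^ k)"
proof -
  have "([:1,-1:] :: int poly) = smult (-1) [:-1,1:]" by simp
  then have "([:1,-1:] :: int poly) ^ k = (smult (-1) [:-1,1:]) ^ k" by simp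
  then show ?thesis by (simp only: smult_power)
qed

lemma monom_power_lin: "([:0,c:] :: int poly) ^ k = monom (c ^ k) k"
proof -
  have "([:0,c:] :: int poly) = monom c 1" by (simp add: monom_Suc monom_0)
  then show ?thesis by (simp add: monom_power)
qed

lemma poly_part:
  fixes n q :: nat
  assumes n: "n \<ge> 1" and q: "q > 0"
    and P: "P = ([:1,-1:] :: int poly) ^ n + of_nat n * [:1,-1:] ^ (n - 1) * [:0, - int q:]"
  shows "order 1 P = n - 1 \<and> coeff (pcompose P [:1,1:]) (n - 1) = (-1) ^ n * int n * int q"
proof -
  obtain k where k: "n = Suc k" using n by (cases n) auto
  define h :: "int poly" where "h = [:1, - 1 - int n * int q:]"
  have P2: "P = [:1,-1:] ^ k * h"
    unfolding P h_def k
    apply (simp add: algebra_simps of_nat_poly)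
    apply (subst smult_add_left[symmetric])
    apply simp
    done
  have h0: "h \<noteq> 0" unfolding h_def by simp
  have hp: "poly h 1 \<noteq> 0" unfolding h_def using q k by simp
  have l0: "([:1,-1:] :: int poly) ^ k \<noteq> 0" by simp
  have "order 1 P = order 1 (([:1,-1:] :: int poly) ^ k) + order 1 h"
    unfolding P2 using h0 l0 by (simp add: order_mult)
  also have "order 1 (([:1,-1:] :: int poly) ^ k) = k"
    unfolding neg_lin_power using order_power_n_n[of "1::int" k] by (simp add: order_smult)
  also have "order 1 h = 0" using hp by (rule order_0I)
  finally have o: "order 1 P = n - 1" using k by simp
  have "pcompose P [:1,1:] = (pcompose [:1,-1:] [:1,1:]) ^ k * pcompose h [:1,1:]"
    unfolding P2 by (simp add: pcompose_mult pcompose_power')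
  also have "pcompose ([:1,-1:] :: int poly) [:1,1:] = [:0,-1:]" by (simp add: pcompose_pCons)
  also have "pcompose h [:1,1:] = [: - int n * int q, - 1 - int n * int q:]"
    unfolding h_def by (simp add: pcompose_pCons algebra_simps)
  finally have "pcompose P [:1,1:] = monom ((-1)^k) k * [: - int n * int q, - 1 - int n * int q:]"
    by (simp add: monom_power_lin)
  then have "coeff (pcompose P [:1,1:]) (n - 1) = (-1)^k * (- int n * int q)"
    using k by (simp only: coeff_monom_mult) simp
  then show ?thesis using o k by (simp add: algebra_simps)
qed


lemma int_dep:
  fixes g :: "'i \<Rightarrow> 'x \<Rightarrow> int"
  assumes "finite U" "finite I" "card U < card I" "\<forall>i\<in>I. \<forall>x. x \<notin> U \<longrightarrow> g i x = 0"
  shows "\<exists>c. (\<exists>i\<in>I. c i \<noteq> 0) \<and> (\<forall>x. (\<Sum>i\<in>I. c i * g i x) = 0)"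
  using assms
proof (induction U arbitrary: I g rule: finite_induct)
  case empty
  then obtain i where i: "i \<in> I" by fastforce
  let ?c = "\<lambda>j. if j = i then 1 else (0::int)"
  have "(\<Sum>j\<in>I. ?c j * g j x) = 0" for x
    using empty by (intro sum.neutral) simp
  then show ?case using i empty by (intro exI[of _ ?c]) auto
next
  case (insert u U)
  show ?case
  proof (cases "\<forall>i\<in>I. g i u = 0")
    case True
    have "\<forall>i\<in>I. \<forall>x. x \<notin> U \<longrightarrow> g i x = 0"
      using True insert.prems(3) by (metis insertE)
    moreover have "card U < card I" using insert by simp
    ultimately show ?thesis using insert.IH insert.prems(1) by blast
  next
    case False
    then obtain i0 where i0: "i0 \<in> I" "g i0 u \<noteq> 0" by blast
    define a where "a = g i0 u"
    define I' where "I' = I - {i0}"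
    define h where "h = (\<lambda>i x. a * g i x - g i u * g i0 x)"
    have fI': "finite I'" using insert.prems(1) I'_def by simp
    have cI': "card U < card I'"
      using insert i0 I'_def by (simp add: card_Diff_singleton)
    have sh: "\<forall>i\<in>I'. \<forall>x. x \<notin> U \<longrightarrow> h i x = 0"
    proof (intro ballI allI impI)
      fix i x assume i: "i \<in> I'" and x: "x \<notin> U"
      show "h i x = 0"
      proof (cases "x = u")
        case True then show ?thesis unfolding h_def a_def by simp
      next
        case False
        then have "x \<notin> insert u U" using x by simp
        then show ?thesis unfolding h_def using insert.prems(3) i i0 I'_def by simp
      qed
    qed
    obtain d where d: "\<exists>i\<in>I'. d i \<noteq> 0" "\<forall>x. (\<Sum>i\<in>I'. d i * h i x) = 0"
      using insert.IH[OF fI' cI' sh] by blast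
    define c where "c = (\<lambda>i. if i = i0 then - (\<Sum>j\<in>I'. d j * g j u) else a * d i)"
    have "(\<Sum>i\<in>I. c i * g i x) = 0" for x
    proof -
      have "(\<Sum>i\<in>I. c i * g i x) = c i0 * g i0 x + (\<Sum>i\<in>I'. c i * g i x)"
        using insert.prems(1) i0 I'_def by (simp add: sum.remove)
      also have "(\<Sum>i\<in>I'. c i * g i x) = (\<Sum>i\<in>I'. a * d i * g i x)"
        unfolding c_def I'_def by (rule sum.cong) auto
      also have "c i0 * g i0 x = - (\<Sum>j\<in>I'. d j * g j u * g i0 x)"
        unfolding c_def by (simp add: sum_distrib_right)
      also have "- (\<Sum>j\<in>I'. d j * g j u * g i0 x) + (\<Sum>i\<in>I'. a * d i * g i x)
          = (\<Sum>i\<in>I'. d i * h i x)"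
        unfolding h_def by (simp add: sum_subtractf[symmetric] algebra_simps)
      also have "\<dots> = 0" using d by simp
      finally show ?thesis .
    qed
    moreover have "\<exists>i\<in>I. c i \<noteq> 0"
    proof -
      obtain i where i: "i \<in> I'" "d i \<noteq> 0" using d by blast
      then have "c i = a * d i" unfolding c_def I'_def by auto
      then have "c i \<noteq> 0" using i i0 a_def by simp
      then show ?thesis using i I'_def by blast
    qed
    ultimately show ?thesis by blast
  qed
qed


locale qgraph =
  fixes W :: "('v, 'e) pre_digraph" and q :: nat
  assumes finV: "finite (verts W)" and finA: "finite (arcs W)" and neV: "verts W \<noteq> {}"
    and tlV: "\<And>E. E \<in> arcs W \<Longrightarrow> tail W E \<in> verts W"
    and hdV: "\<And>E. E \<in> arcs W \<Longrightarrow> head W E \<in> verts W"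
    and cnt: "\<And>w v. w \<in> verts W \<Longrightarrow> v \<in> verts W \<Longrightarrow>
       card {E \<in> arcs W. tail W E = w \<and> head W E = v} = (if w = v then 1 else 0) + q"
    and qpos: "q > 0"
begin

lemma zeta: "zeta_poly W = [:1,-1:] ^ card (verts W) + of_nat (card (verts W)) * [:1,-1:] ^ (card (verts W) - 1) * [:0, - int q:]"
proof -
  have "zeta_poly W = (\<Sum>\<pi>\<in>{\<pi>. \<pi> permutes verts W}. of_int (sign \<pi>) *
      (\<Prod>w\<in>verts W. (if \<pi> w = w then [:1,-1:] else 0) + [:0, - int q:]))"
    unfolding zeta_poly_def
  proof (intro sum.cong refl arg_cong2[where f="(*)"] prod.cong)
    fix \<pi> w assume \<pi>: "\<pi> \<in> {\<pi>. \<pi> permutes verts W}" and w: "w \<in> verts W"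
    have pw: "\<pi> w \<in> verts W" using \<pi> w permutes_in_image by fastforce
    show "IAu W w (\<pi> w) = (if \<pi> w = w then [:1,-1:] else 0) + [:0, - int q:]"
      unfolding IAu_def cnt[OF w pw] by (auto simp: of_nat_poly one_pCons diff_pCons)
  qed
  also have "\<dots> = [:1,-1:] ^ card (verts W) + of_nat (card (verts W)) * [:1,-1:] ^ (card (verts W) - 1) * [:0, - int q:]"
    by (rule det_aIbJ[OF finV])
  finally show ?thesis .
qed

lemma r_gstar: "r_ord W = card (verts W) - 1 \<and> gstar W = (-1) ^ card (verts W) * int (card (verts W)) * int q"
proof -
  have n: "card (verts W) \<ge> 1" using finV neV by (simp add: Suc_le_eq card_gt_0_iff)
  show ?thesis using poly_part[OF n qpos zeta] unfolding r_ord_def gstar_def by simp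
qed

definition cst :: "int \<Rightarrow> 'v \<Rightarrow> int" where
  "cst k = (\<lambda>v. if v \<in> verts W then int q * k else 0)"

lemma adj_eq:
  assumes f: "f \<in> ZV W"
  shows "adj W f v = (if v \<in> verts W then f v + int q * (\<Sum>w\<in>verts W. f w) else 0)"
proof (cases "v \<in> verts W")
  case False
  then have e0: "{\<epsilon> \<in> arcs W. head W \<epsilon> = v} = {}" using hdV by auto
  show ?thesis unfolding adj_def e0 using False by simp
next
  case True
  let ?S = "{\<epsilon> \<in> arcs W. head W \<epsilon> = v}"
  have fS: "finite ?S" using finA by simp
  have "adj W f v = (\<Sum>w\<in>verts W. \<Sum>\<epsilon>\<in>{x. x \<in> ?S \<and> tail W x = w}. f (tail W \<epsilon>))"
    unfolding adj_def by (rule sum.group[symmetric, OF fS finV]) (auto intro: tlV)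
  also have "\<dots> = (\<Sum>w\<in>verts W. of_nat (card {E \<in> arcs W. tail W E = w \<and> head W E = v}) * f w)"
  proof (rule sum.cong[OF refl])
    fix w assume w: "w \<in> verts W"
    have e: "{x. x \<in> ?S \<and> tail W x = w} = {E \<in> arcs W. tail W E = w \<and> head W E = v}" by auto
    show "(\<Sum>\<epsilon>\<in>{x. x \<in> ?S \<and> tail W x = w}. f (tail W \<epsilon>)) = of_nat (card {E \<in> arcs W. tail W E = w \<and> head W E = v}) * f w"
      unfolding e by simp
  qed
  also have "\<dots> = (\<Sum>w\<in>verts W. (if w = v then f w else 0) + int q * f w)"
    by (rule sum.cong[OF refl]) (simp add: cnt True algebra_simps)
  also have "\<dots> = f v + int q * (\<Sum>w\<in>verts W. f w)"
    using finV True by (simp add: sum.distrib sum_distrib_left)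
  finally show ?thesis using True by simp
qed

lemma lattice_iff: "g \<in> BF_lattice W \<longleftrightarrow> (\<exists>k. g = cst k)"
proof
  assume "g \<in> BF_lattice W"
  then obtain f where f: "f \<in> ZV W" and g: "g = (\<lambda>v. f v - adj W f v)"
    unfolding BF_lattice_def by blast
  have "g = cst (- (\<Sum>w\<in>verts W. f w))"
    unfolding g cst_def
  proof
    fix v show "f v - adj W f v = (if v \<in> verts W then int q * - (\<Sum>w\<in>verts W. f w) else 0)"
      using f unfolding adj_eq[OF f] ZV_def by auto
  qed
  then show "\<exists>k. g = cst k" by blast
next
  assume "\<exists>k. g = cst k"
  then obtain k where g: "g = cst k" by blast
  obtain v0 where v0: "v0 \<in> verts W" using neV by blast
  define f where "f = (\<lambda>v. if v = v0 then - k else 0)"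
  have f: "f \<in> ZV W" unfolding ZV_def f_def using v0 by auto
  have s: "(\<Sum>w\<in>verts W. f w) = - k" unfolding f_def using finV v0 by simp
  have "g = (\<lambda>v. f v - adj W f v)"
  proof
    fix v show "g v = f v - adj W f v"
      unfolding g cst_def adj_eq[OF f] s using f unfolding ZV_def by auto
  qed
  then show "g \<in> BF_lattice W" unfolding BF_lattice_def using f by blast
qed

definition R :: "(('v \<Rightarrow> int) \<times> ('v \<Rightarrow> int)) set" where
  "R = {(f, g). f \<in> ZV W \<and> g \<in> ZV W \<and> f - g \<in> BF_lattice W}"

lemma BF_eq: "BF W = ZV W // R" unfolding BF_def R_def ..

lemma R_iff: "(f, g) \<in> R \<longleftrightarrow> f \<in> ZV W \<and> g \<in> ZV W \<and> (\<exists>k. \<forall>v\<in>verts W. f v - g v = int q * k)"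
proof -
  have "f \<in> ZV W \<Longrightarrow> g \<in> ZV W \<Longrightarrow> (\<exists>k. f - g = cst k) \<longleftrightarrow> (\<exists>k. \<forall>v\<in>verts W. f v - g v = int q * k)"
    unfolding cst_def ZV_def fun_eq_iff by auto
  then show ?thesis unfolding R_def lattice_iff by auto
qed

lemma equivR: "equiv (ZV W) R"
proof (rule equivI)
  show "refl_on (ZV W) R" unfolding refl_on_def R_iff by (auto simp: R_def)
  show "sym R" unfolding sym_def R_iff by (metis minus_diff_eq mult_minus_right)
  show "trans R" unfolding trans_def R_iff
    by (metis (no_types, opaque_lifting) diff_add_cancel add_diff_eq distrib_left diff_diff_eq2)
  show "R \<subseteq> ZV W \<times> ZV W" unfolding R_def by auto
qed

end


lemma modsmall: assumes e: "int a - int b = int q * k" and "a < q" "b < q" shows "a = b"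
proof -
  have "k = 0"
  proof (rule ccontr)
    assume "k \<noteq> 0"
    then have "k \<ge> 1 \<or> k \<le> -1" by linarith
    then show False
    proof
      assume "k \<ge> 1"
      then have "int q * 1 \<le> int q * k" by (intro mult_left_mono) simp_all
      then show False using e assms by linarith
    next
      assume "k \<le> -1"
      then have "int q * k \<le> int q * (-1)" by (intro mult_left_mono) simp_all
      then show False using e assms by linarith
    qed
  qed
  then show ?thesis using e by simp
qed
context qgraph begin

definition one :: "int \<Rightarrow> 'v \<Rightarrow> int" where
  "one m = (\<lambda>v. if v \<in> verts W then m else 0)"

lemma one_ZV: "one m \<in> ZV W" unfolding one_def ZV_def by auto

lemma class_ZV: "c \<in> BF W \<Longrightarrow> f \<in> c \<Longrightarrow> f \<in> ZV W"
  unfolding BF_eq using in_quotient_imp_subset[OF equivR] by blast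

lemma tors_eq: "BF_tors W = (\<lambda>m. R``{one (int m)}) ` {0..<q}"
proof
  show "BF_tors W \<subseteq> (\<lambda>m. R``{one (int m)}) ` {0..<q}"
  proof
    fix c assume "c \<in> BF_tors W"
    then obtain n f where c: "c \<in> BF W" and n: "n > 0" and f: "f \<in> c" and nf: "(\<lambda>v. n * f v) \<in> BF_lattice W"
      unfolding BF_tors_def by blast
    obtain f0 where f0: "c = R``{f0}" "f0 \<in> ZV W" using c unfolding BF_eq by (rule quotientE)
    have "(f0, f) \<in> R" using f f0 by simp
    then have cf: "c = R``{f}" using f0 equiv_class_eq[OF equivR] by simp
    have fZ: "f \<in> ZV W" using class_ZV[OF c f] .
    obtain k where k: "(\<lambda>v. n * f v) = cst k" using nf lattice_iff by blast
    obtain v0 where v0: "v0 \<in> verts W" using neV by blast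
    have fv: "f v = f v0" if "v \<in> verts W" for v
    proof -
      have "n * f v = int q * k" using fun_cong[OF k, of v] that unfolding cst_def by simp
      moreover have "n * f v0 = int q * k" using fun_cong[OF k, of v0] v0 unfolding cst_def by simp
      ultimately show ?thesis using n by (metis dual_order.irrefl mult_left_cancel)
    qed
    define m where "m = nat (f v0 mod int q)"
    have mi: "int m = f v0 mod int q" unfolding m_def using qpos by simp
    have mq: "m < q" using qpos mi by (metis Euclidean_Rings.pos_mod_bound of_nat_0_less_iff of_nat_less_iff)
    have "(f, one (int m)) \<in> R"
      unfolding R_iff using fZ one_ZV
      by (intro conjI exI[of _ "f v0 div int q"]) (auto simp: one_def fv mi minus_mod_eq_mult_div)
    then have "c = R``{one (int m)}" using cf equiv_class_eq[OF equivR] by simp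
    then show "c \<in> (\<lambda>m. R``{one (int m)}) ` {0..<q}" using mq by auto
  qed
next
  show "(\<lambda>m. R``{one (int m)}) ` {0..<q} \<subseteq> BF_tors W"
  proof
    fix c assume "c \<in> (\<lambda>m. R``{one (int m)}) ` {0..<q}"
    then obtain m where c: "c = R``{one (int m)}" by blast
    have "c \<in> BF W" unfolding BF_eq c using one_ZV by (rule quotientI)
    moreover have "one (int m) \<in> c" unfolding c using equiv_class_self[OF equivR one_ZV] .
    moreover have "(\<lambda>v. int q * one (int m) v) \<in> BF_lattice W"
      unfolding lattice_iff cst_def one_def by (intro exI[of _ "int m"]) auto
    ultimately show "c \<in> BF_tors W" unfolding BF_tors_def using qpos
      by (intro CollectI conjI exI[of _ "int q"]) auto
  qed
qed

lemma tors_card: "card (BF_tors W) = q"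
proof -
  have "inj_on (\<lambda>m. R``{one (int m)}) {0..<q}"
  proof
    fix a b assume a: "a \<in> {0..<q}" and b: "b \<in> {0..<q}" and e: "R``{one (int a)} = R``{one (int b)}"
    then have "(one (int a), one (int b)) \<in> R" using eq_equiv_class_iff[OF equivR one_ZV one_ZV] by simp
    then obtain k where k: "\<forall>v\<in>verts W. one (int a) v - one (int b) v = int q * k" unfolding R_iff by blast
    obtain v0 where v0: "v0 \<in> verts W" using neV by blast
    have "int a - int b = int q * k" using k v0 unfolding one_def by auto
    then show "a = b" using a b modsmall by auto
  qed
  then show ?thesis unfolding tors_eq by (simp add: card_image)
qed

end


context qgraph begin

definition rep :: "('v \<Rightarrow> int) set \<Rightarrow> 'v \<Rightarrow> int" where
  "rep s = (SOME f. f \<in> s)"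

lemma rep_in: "s \<in> BF W \<Longrightarrow> rep s \<in> s"
  unfolding rep_def using in_quotient_imp_non_empty[OF equivR] unfolding BF_eq
  by (metis ex_in_conv someI_ex)

lemma indep_bound:
  assumes S: "S \<subseteq> BF W" "finite S" and ind: "BF_indep W S"
  shows "card S \<le> card (verts W) - 1"
proof (rule ccontr)
  assume "\<not> card S \<le> card (verts W) - 1"
  then have cS: "card (verts W) - 1 < card S" by simp
  obtain v0 where v0: "v0 \<in> verts W" using neV by blast
  define U where "U = verts W - {v0}"
  have cU: "card U < card S" unfolding U_def using cS v0 finV by simp
  have fU: "finite U" unfolding U_def using finV by simp
  define g where "g = (\<lambda>s x. rep s x - (if x \<in> verts W then rep s v0 else 0))"
  have rZ: "rep s \<in> ZV W" if "s \<in> S" for s using class_ZV rep_in S that by blast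
  have sup: "\<forall>s\<in>S. \<forall>x. x \<notin> U \<longrightarrow> g s x = 0"
  proof (intro ballI allI impI)
    fix s x assume s: "s \<in> S" and x: "x \<notin> U"
    show "g s x = 0"
    proof (cases "x = v0")
      case True then show ?thesis unfolding g_def using v0 by simp
    next
      case False
      then have "x \<notin> verts W" using x U_def by simp
      then show ?thesis unfolding g_def using rZ[OF s] unfolding ZV_def by simp
    qed
  qed
  obtain c where c: "\<exists>s\<in>S. c s \<noteq> 0" "\<forall>x. (\<Sum>s\<in>S. c s * g s x) = 0"
    using int_dep[OF fU S(2) cU sup] by blast
  define K where "K = (\<Sum>s\<in>S. c s * rep s v0)"
  have "(\<lambda>v. \<Sum>s\<in>S. (int q * c s) * (SOME f. f \<in> s) v) = cst K"
  proof
    fix v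
    have "(\<Sum>s\<in>S. (int q * c s) * (SOME f. f \<in> s) v)
        = int q * (\<Sum>s\<in>S. c s * g s v) + int q * (if v \<in> verts W then K else 0)"
      unfolding g_def K_def rep_def[symmetric]
      by (simp add: sum_distrib_left algebra_simps sum.distrib sum_subtractf)
    then show "(\<Sum>s\<in>S. (int q * c s) * (SOME f. f \<in> s) v) = cst K v"
      using c(2) unfolding cst_def by simp
  qed
  then have "(\<lambda>v. \<Sum>s\<in>S. (int q * c s) * (SOME f. f \<in> s) v) \<in> BF_lattice W"
    using lattice_iff by blast
  then have "\<forall>s\<in>S. (\<lambda>s. int q * c s) s = 0"
    by (rule ind[unfolded BF_indep_def, THEN spec, THEN mp])
  then have "\<forall>s\<in>S. int q * c s = 0" by simp
  then show False using c(1) qpos by simp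
qed

definition dl :: "'v \<Rightarrow> 'v \<Rightarrow> int" where
  "dl u = (\<lambda>x. if x = u then 1 else 0)"

lemma dl_ZV: "u \<in> verts W \<Longrightarrow> dl u \<in> ZV W" unfolding dl_def ZV_def by auto

lemma lower:
  assumes v0: "v0 \<in> verts W"
  defines "S0 \<equiv> (\<lambda>u. R``{dl u}) ` (verts W - {v0})"
  shows "S0 \<subseteq> BF W" "finite S0" "card S0 = card (verts W) - 1" "BF_indep W S0"
proof -
  let ?U = "verts W - {v0}"
  show S0B: "S0 \<subseteq> BF W" unfolding S0_def BF_eq using dl_ZV by (auto intro: quotientI)
  show "finite S0" unfolding S0_def using finV by simp
  have inj: "inj_on (\<lambda>u. R``{dl u}) ?U"
  proof
    fix a b assume a: "a \<in> ?U" and b: "b \<in> ?U" and e: "R``{dl a} = R``{dl b}"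
    have "(dl a, dl b) \<in> R" using e eq_equiv_class_iff[OF equivR dl_ZV dl_ZV] a b by blast
    then obtain k where k: "\<forall>v\<in>verts W. dl a v - dl b v = int q * k" unfolding R_iff by blast
    show "a = b"
    proof (rule ccontr)
      assume ab: "a \<noteq> b"
      have "1 = int q * k" using k[rule_format, of a] a ab unfolding dl_def by auto
      moreover have "0 = int q * k" using k[rule_format, OF v0] v0 a b unfolding dl_def by auto
      ultimately show False by simp
    qed
  qed
  then show "card S0 = card (verts W) - 1" unfolding S0_def using finV v0 by (simp add: card_image)
  show "BF_indep W S0"
    unfolding BF_indep_def
  proof (intro allI impI ballI)
    fix c :: "('v \<Rightarrow> int) set \<Rightarrow> int" and s
    assume H: "(\<lambda>v. \<Sum>s\<in>S0. c s * (SOME f. f \<in> s) v) \<in> BF_lattice W" and s: "s \<in> S0"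
    have "\<forall>u\<in>?U. \<exists>t. \<forall>v\<in>verts W. rep (R``{dl u}) v = dl u v - t"
    proof
      fix u assume u: "u \<in> ?U"
      have "R``{dl u} \<in> BF W" using S0B u unfolding S0_def by blast
      then have "rep (R``{dl u}) \<in> R``{dl u}" by (rule rep_in)
      then have "(dl u, rep (R``{dl u})) \<in> R" by simp
      then obtain k where "\<forall>v\<in>verts W. dl u v - rep (R``{dl u}) v = int q * k" unfolding R_iff by blast
      then show "\<exists>t. \<forall>v\<in>verts W. rep (R``{dl u}) v = dl u v - t" by (intro exI[of _ "int q * k"]) auto
    qed
    then obtain t where t: "\<forall>u\<in>?U. \<forall>v\<in>verts W. rep (R``{dl u}) v = dl u v - t u"
      by metis
    obtain K where K: "(\<lambda>v. \<Sum>s\<in>S0. c s * (SOME f. f \<in> s) v) = cst K" using H lattice_iff by blast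
    define T where "T = (\<Sum>u\<in>?U. c (R``{dl u}) * t u)"
    have sv: "(\<Sum>s\<in>S0. c s * (SOME f. f \<in> s) v) = c (R``{dl v}) * (if v \<in> ?U then 1 else 0) - T"
      if v: "v \<in> verts W" for v
    proof -
      have "(\<Sum>s\<in>S0. c s * (SOME f. f \<in> s) v) = (\<Sum>u\<in>?U. c (R``{dl u}) * rep (R``{dl u}) v)"
        unfolding S0_def rep_def by (simp add: sum.reindex[OF inj])
      also have "\<dots> = (\<Sum>u\<in>?U. c (R``{dl u}) * dl u v - c (R``{dl u}) * t u)"
        by (rule sum.cong[OF refl]) (simp add: t v right_diff_distrib)
      also have "\<dots> = (\<Sum>u\<in>?U. c (R``{dl u}) * dl u v) - T"
        unfolding T_def by (simp add: sum_subtractf)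
      also have "(\<Sum>u\<in>?U. c (R``{dl u}) * dl u v) = c (R``{dl v}) * (if v \<in> ?U then 1 else 0)"
        unfolding dl_def using finV by (simp add: if_distrib sum.delta cong: if_cong)
      finally show ?thesis .
    qed
    obtain u where u: "u \<in> ?U" "s = R``{dl u}" using s unfolding S0_def by blast
    have "c (R``{dl u}) - T = int q * K" using sv[of u] fun_cong[OF K, of u] u unfolding cst_def by simp
    moreover have "- T = int q * K" using sv[of v0] fun_cong[OF K, of v0] v0 unfolding cst_def by simp
    ultimately show "c s = 0" using u by simp
  qed
qed

lemma rank: "BF_rank W = card (verts W) - 1"
proof -
  let ?A = "{card S |S. S \<subseteq> BF W \<and> finite S \<and> BF_indep W S}"
  have bd: "\<And>y. y \<in> ?A \<Longrightarrow> y \<le> card (verts W) - 1"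
  proof -
    fix y assume "y \<in> ?A"
    then obtain S where "y = card S" "S \<subseteq> BF W" "finite S" "BF_indep W S" by blast
    then show "y \<le> card (verts W) - 1" using indep_bound by simp
  qed
  have fA: "finite ?A"
  proof (rule finite_subset[of _ "{..card (verts W) - 1}"])
    show "?A \<subseteq> {..card (verts W) - 1}" using bd by (simp add: subset_iff)
  qed simp
  obtain v0 where v0: "v0 \<in> verts W" using neV by blast
  note L = lower[OF v0]
  have mem: "card (verts W) - 1 \<in> ?A"
    apply (rule CollectI)
    apply (rule exI[of _ "(\<lambda>u. R``{dl u}) ` (verts W - {v0})"])
    using L by simp
  show ?thesis unfolding BF_rank_def by (rule Max_eqI[OF fA bd mem])
qed

end


definition cl :: "nat \<Rightarrow> nat \<Rightarrow> (unit \<times> nat) set" where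
  "cl p \<sigma> = {((), \<sigma>), ((), p - \<sigma>)}"

definition al :: "nat \<Rightarrow> xedge \<Rightarrow> nat \<Rightarrow> (xedge \<times> nat) set" where
  "al p e \<sigma> = {(e, \<sigma>), (e, p - \<sigma>)}"

context
  fixes p :: nat
  assumes pr: "prime p" and od: "odd p"
begin

lemma p3: "p \<ge> 3"
proof -
  have "p \<ge> 2" using pr prime_ge_2_nat by blast
  moreover have "p \<noteq> 2" using od by auto
  ultimately show ?thesis by linarith
qed

lemma neg_mod: "\<sigma> \<in> {1..<p} \<Longrightarrow> (p - 1) * \<sigma> mod p = p - \<sigma>"
proof -
  assume s: "\<sigma> \<in> {1..<p}"
  have "(p - 1) * \<sigma> = (p - \<sigma>) + p * (\<sigma> - 1)" using s by (simp add: algebra_simps diff_mult_distrib diff_mult_distrib2)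
  then have "(p - 1) * \<sigma> mod p = (p - \<sigma>) mod p" by simp
  also have "\<dots> = p - \<sigma>" using s by simp
  finally show ?thesis .
qed

lemma lorb: "\<sigma> \<in> {1..<p} \<Longrightarrow> lorbit (jgrp p) (dmul p) (x, \<sigma>) = {(x, \<sigma>), (x, p - \<sigma>)}"
proof -
  assume s: "\<sigma> \<in> {1..<p}"
  have "lorbit (jgrp p) (dmul p) (x, \<sigma>) = {(x, 1 * \<sigma> mod p), (x, (p - 1) * \<sigma> mod p)}"
    unfolding lorbit_def jgrp_def dmul_def by (auto intro: exI[of _ 1])
  then show ?thesis using neg_mod[OF s] s by simp
qed

lemma not_dvd: "i \<in> {1..<p} \<Longrightarrow> \<not> p dvd i"
  by (auto dest: dvd_imp_le)

lemma mulD: "a \<in> {1..<p} \<Longrightarrow> b \<in> {1..<p} \<Longrightarrow> a * b mod p \<in> {1..<p}"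
proof -
  assume a: "a \<in> {1..<p}" and b: "b \<in> {1..<p}"
  have "\<not> p dvd a * b" using not_dvd[OF a] not_dvd[OF b] pr prime_dvd_mult_iff by blast
  then show ?thesis using p3 by (auto simp: dvd_eq_mod_eq_0)
qed

lemma sum_p: "x \<in> {1..<p} \<Longrightarrow> y \<in> {1..<p} \<Longrightarrow> [x + y = 0] (mod p) \<Longrightarrow> x + y = p"
proof -
  assume x: "x \<in> {1..<p}" and y: "y \<in> {1..<p}" and c: "[x + y = 0] (mod p)"
  then obtain m where m: "x + y = p * m" unfolding cong_0_iff by blast
  have "m \<noteq> 0"
  proof
    assume "m = 0" then show False using m x by simp
  qed
  moreover have "m < 2" using m x y by (metis atLeastLessThan_iff add_less_mono mult_2_right nat_mult_less_cancel1 not_less_zero zero_less_iff_neq_zero)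
  ultimately have "m = 1" by simp
  then show ?thesis using m by simp
qed

lemma neg_mul: "\<sigma> \<in> {1..<p} \<Longrightarrow> a \<in> {1..<p} \<Longrightarrow> (p - \<sigma>) * a mod p = p - \<sigma> * a mod p"
proof -
  assume s: "\<sigma> \<in> {1..<p}" and a: "a \<in> {1..<p}"
  have ps: "p - \<sigma> \<in> {1..<p}" using s by auto
  have "[(p - \<sigma>) * a mod p + \<sigma> * a mod p = (p - \<sigma>) * a + \<sigma> * a] (mod p)"
    by (simp add: cong_def mod_add_eq)
  moreover have "(p - \<sigma>) * a + \<sigma> * a = p * a" using s by (simp add: add_mult_distrib[symmetric])
  ultimately have "[(p - \<sigma>) * a mod p + \<sigma> * a mod p = 0] (mod p)"
    by (simp add: cong_def)
  then have "(p - \<sigma>) * a mod p + \<sigma> * a mod p = p" using sum_p mulD[OF ps a] mulD[OF s a] by blast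
  then show ?thesis by simp
qed

lemma inv_ex: "i \<in> {1..<p} \<Longrightarrow> \<exists>!b. b \<in> Delta p \<and> dmul p i b = 1"
proof -
  assume i: "i \<in> {1..<p}"
  have "coprime p i" using prime_imp_coprime[OF pr not_dvd[OF i]] .
  then have cop: "coprime i p" by (simp add: coprime_commute)
  obtain x where x: "[i * x = Suc 0] (mod p)" using cong_solve_coprime_nat[OF cop] by blast
  define b where "b = x mod p"
  have ib: "i * b mod p = 1" unfolding b_def using x p3 by (simp add: cong_def mod_mult_right_eq)
  have "b \<noteq> 0" using ib by (metis mod_0 mult_0_right zero_neq_one)
  moreover have "b < p" unfolding b_def using p3 by simp
  ultimately have bD: "b \<in> Delta p" unfolding Delta_def by simp
  show ?thesis
  proof (rule ex1I[of _ b])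
    show "b \<in> Delta p \<and> dmul p i b = 1" using bD ib unfolding dmul_def by simp
    fix b' assume b': "b' \<in> Delta p \<and> dmul p i b' = 1"
    then have "[i * b' = i * b] (mod p)" using ib unfolding dmul_def cong_def by simp
    then have "[b' = b] (mod p)" using cong_mult_lcancel_nat[OF cop] by blast
    then show "b' = b" using b' bD unfolding Delta_def by (simp add: cong_less_modulus_unique_nat)
  qed
qed

lemma dinv: "i \<in> {1..<p} \<Longrightarrow> dinv p i \<in> {1..<p} \<and> [i * dinv p i = 1] (mod p)"
proof -
  assume i: "i \<in> {1..<p}"
  have "dinv p i \<in> Delta p \<and> dmul p i (dinv p i) = 1"
    unfolding dinv_def by (rule theI'[OF inv_ex[OF i]])
  then show ?thesis unfolding Delta_def dmul_def cong_def using p3 by simp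
qed

lemma alphaD: "e \<in> X_edges p \<Longrightarrow> alpha p e \<in> {1..<p}"
  unfolding X_edges_def alpha_def using p3 dinv by auto

lemma cl_eq: "\<sigma> \<in> {1..<p} \<Longrightarrow> \<tau> \<in> {1..<p} \<Longrightarrow> cl p \<sigma> = cl p \<tau> \<longleftrightarrow> \<sigma> = \<tau> \<or> \<sigma> + \<tau> = p"
  unfolding cl_def doubleton_eq_iff by auto

lemma cl_neg: "\<sigma> \<in> {1..<p} \<Longrightarrow> cl p (p - \<sigma>) = cl p \<sigma>"
  unfolding cl_def by auto

lemma verts_Y: "verts (Yplus p) = cl p ` {1..<p}"
  unfolding Yplus_def quot_def Yd_def derived_def Xb_def Delta_def
  by (force simp: lorb cl_def)

lemma arcs_Y: "arcs (Yplus p) = (\<lambda>(e, \<sigma>). al p e \<sigma>) ` (X_edges p \<times> {1..<p})"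
  unfolding Yplus_def quot_def Yd_def derived_def Xb_def Delta_def
  by (force simp: lorb al_def)

lemma tail_Y: "e \<in> X_edges p \<Longrightarrow> \<sigma> \<in> {1..<p} \<Longrightarrow> tail (Yplus p) (al p e \<sigma>) = cl p \<sigma>"
proof -
  assume e: "e \<in> X_edges p" and s: "\<sigma> \<in> {1..<p}"
  define \<epsilon> where "\<epsilon> = (SOME \<epsilon>. \<epsilon> \<in> al p e \<sigma>)"
  have "\<epsilon> \<in> al p e \<sigma>" unfolding \<epsilon>_def al_def by (rule someI[of _ "(e, \<sigma>)"]) simp
  then have "\<epsilon> = (e, \<sigma>) \<or> \<epsilon> = (e, p - \<sigma>)" unfolding al_def by simp
  moreover have "p - \<sigma> \<in> {1..<p}" using s by auto
  ultimately have "lorbit (jgrp p) (dmul p) (tail (Yd p) \<epsilon>) = cl p \<sigma>"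
    unfolding Yd_def derived_def Xb_def using s
    by (auto simp: lorb cl_def)
  then show ?thesis unfolding Yplus_def quot_def \<epsilon>_def by simp
qed

lemma head_Y: "e \<in> X_edges p \<Longrightarrow> \<sigma> \<in> {1..<p} \<Longrightarrow> head (Yplus p) (al p e \<sigma>) = cl p (\<sigma> * alpha p e mod p)"
proof -
  assume e: "e \<in> X_edges p" and s: "\<sigma> \<in> {1..<p}"
  define \<epsilon> where "\<epsilon> = (SOME \<epsilon>. \<epsilon> \<in> al p e \<sigma>)"
  have "\<epsilon> \<in> al p e \<sigma>" unfolding \<epsilon>_def al_def by (rule someI[of _ "(e, \<sigma>)"]) simp
  then have "\<epsilon> = (e, \<sigma>) \<or> \<epsilon> = (e, p - \<sigma>)" unfolding al_def by simp
  moreover have ps: "p - \<sigma> \<in> {1..<p}" using s by auto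
  moreover have a: "alpha p e \<in> {1..<p}" using alphaD[OF e] .
  moreover have m1: "\<sigma> * alpha p e mod p \<in> {1..<p}" using mulD[OF s a] .
  moreover have m2: "(p - \<sigma>) * alpha p e mod p \<in> {1..<p}" using mulD[OF ps a] .
  ultimately have "lorbit (jgrp p) (dmul p) (head (Yd p) \<epsilon>) = cl p (\<sigma> * alpha p e mod p)"
    unfolding Yd_def derived_def Xb_def
    by (auto simp: lorb dmul_def neg_mul[OF s a] cl_def)
  then show ?thesis unfolding Yplus_def quot_def \<epsilon>_def by simp
qed

end


lemma ncong: "[a = b] (mod m) \<longleftrightarrow> int m dvd int a - int b" for a b m :: nat
  by (simp add: cong_int_iff[symmetric] cong_iff_dvd_diff)

lemma ncong0: "[a + b = 0] (mod m) \<longleftrightarrow> int m dvd int a + int b" for a b m :: nat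
  by (simp add: cong_0_iff flip: of_nat_add int_dvd_int_iff)

lemma key_int:
  fixes P s di t dt i :: int
  assumes h1: "P dvd i * di - 1" and h2: "P dvd t * dt - 1"
  shows "P dvd s * di - t \<longleftrightarrow> P dvd i - s * dt"
    and "P dvd s * di + t \<longleftrightarrow> P dvd i + s * dt"
proof -
  show "P dvd s * di - t \<longleftrightarrow> P dvd i - s * dt"
  proof
    assume h: "P dvd s * di - t"
    have "i - s * dt = (s * di - t) * (- (i * dt)) + (i * di - 1) * (s * dt) + (t * dt - 1) * (- i)"
      by (simp add: algebra_simps)
    then show "P dvd i - s * dt" using h h1 h2 by (simp add: dvd_add dvd_mult2)
  next
    assume h: "P dvd i - s * dt"
    have "s * di - t = (i - s * dt) * (- (di * t)) + (i * di - 1) * t + (t * dt - 1) * (- (s * di))"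
      by (simp add: algebra_simps)
    then show "P dvd s * di - t" using h h1 h2 by (simp add: dvd_add dvd_mult2)
  qed
  show "P dvd s * di + t \<longleftrightarrow> P dvd i + s * dt"
  proof
    assume h: "P dvd s * di + t"
    have "i + s * dt = (s * di + t) * (i * dt) + (i * di - 1) * (- (s * dt)) + (t * dt - 1) * (- i)"
      by (simp add: algebra_simps)
    then show "P dvd i + s * dt" using h h1 h2 by (simp add: dvd_add dvd_mult2)
  next
    assume h: "P dvd i + s * dt"
    have "s * di + t = (i + s * dt) * (di * t) + (i * di - 1) * (- t) + (t * dt - 1) * (- (s * di))"
      by (simp add: algebra_simps)
    then show "P dvd s * di + t" using h h1 h2 by (simp add: dvd_add dvd_mult2)
  qed
qed

context
  fixes p :: nat
  assumes pr: "prime p" and od: "odd p"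
begin

lemma eq_cong: "y \<in> {1..<p} \<Longrightarrow> a mod p = y \<longleftrightarrow> [a = y] (mod p)"
  by (simp add: cong_def)

lemma negeq_cong: "x \<in> {1..<p} \<Longrightarrow> y \<in> {1..<p} \<Longrightarrow> x + y = p \<longleftrightarrow> [x + y = 0] (mod p)"
  using sum_p[OF pr od] by (auto simp: cong_0_iff)

lemma Qlemma:
  assumes s: "\<sigma> \<in> {1..<p}" and t: "\<tau> \<in> {1..<p}" and i: "i \<in> {1..<p}"
  shows "cl p (\<sigma> * dinv p i mod p) = cl p \<tau> \<longleftrightarrow> i = \<sigma> * dinv p \<tau> mod p \<or> i = p - \<sigma> * dinv p \<tau> mod p"
proof -
  have di: "dinv p i \<in> {1..<p}" "[i * dinv p i = 1] (mod p)" using dinv[OF pr od i] by auto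
  have dt: "dinv p \<tau> \<in> {1..<p}" "[\<tau> * dinv p \<tau> = 1] (mod p)" using dinv[OF pr od t] by auto
  define x where "x = \<sigma> * dinv p i mod p"
  define i0 where "i0 = \<sigma> * dinv p \<tau> mod p"
  have x: "x \<in> {1..<p}" unfolding x_def using mulD[OF pr od s di(1)] .
  have i0: "i0 \<in> {1..<p}" unfolding i0_def using mulD[OF pr od s dt(1)] .
  have h1: "int p dvd int i * int (dinv p i) - 1" using di(2) unfolding ncong by simp
  have h2: "int p dvd int \<tau> * int (dinv p \<tau>) - 1" using dt(2) unfolding ncong by simp
  note K = key_int[OF h1 h2, of "int \<sigma>"]
  have "cl p x = cl p \<tau> \<longleftrightarrow> x = \<tau> \<or> x + \<tau> = p" using cl_eq[OF pr od x t] .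
  also have "x = \<tau> \<longleftrightarrow> [\<sigma> * dinv p i = \<tau>] (mod p)" unfolding x_def using eq_cong[OF t] .
  also have "x + \<tau> = p \<longleftrightarrow> [\<sigma> * dinv p i + \<tau> = 0] (mod p)"
    unfolding negeq_cong[OF x t] unfolding x_def cong_def by (simp add: mod_add_left_eq)
  also have "[\<sigma> * dinv p i = \<tau>] (mod p) \<longleftrightarrow> [i = \<sigma> * dinv p \<tau>] (mod p)"
    unfolding ncong using K(1) by simp
  also have "[\<sigma> * dinv p i + \<tau> = 0] (mod p) \<longleftrightarrow> [i + \<sigma> * dinv p \<tau> = 0] (mod p)"
    unfolding ncong0 using K(2) by simp
  also have "[i = \<sigma> * dinv p \<tau>] (mod p) \<longleftrightarrow> i = i0"
    unfolding i0_def using eq_cong[OF i, of "\<sigma> * dinv p \<tau>"] cong_sym_eq by metis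
  also have "[i + \<sigma> * dinv p \<tau> = 0] (mod p) \<longleftrightarrow> i + i0 = p"
    unfolding negeq_cong[OF i i0] unfolding i0_def cong_def by (simp add: mod_add_right_eq)
  also have "i + i0 = p \<longleftrightarrow> i = p - i0" using i0 by auto
  finally show ?thesis unfolding x_def i0_def .
qed

end


context
  fixes p :: nat
  assumes pr: "prime p" and od: "odd p"
begin

lemma X_fin: "finite (X_edges p)"
proof -
  have "X_edges p \<subseteq> insert E0 ((\<lambda>(i, k). Eik i k) ` ({..p} \<times> {..p}))"
    unfolding X_edges_def by auto
  then show ?thesis by (rule finite_subset) simp
qed

lemma card_Eik:
  assumes "finite I"
  shows "card {Eik i k | i k. i \<in> I \<and> 1 \<le> k \<and> k \<le> i} = (\<Sum>i\<in>I. i)"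
proof -
  have "{Eik i k | i k. i \<in> I \<and> 1 \<le> k \<and> k \<le> i} = (\<lambda>(i, k). Eik i k) ` (SIGMA i:I. {1..i})"
    by auto
  moreover have "inj_on (\<lambda>(i, k). Eik i k) (SIGMA i:I. {1..i})" by (auto simp: inj_on_def)
  ultimately have "card {Eik i k | i k. i \<in> I \<and> 1 \<le> k \<and> k \<le> i} = card (SIGMA i:I. {1..i})"
    by (simp add: card_image)
  also have "\<dots> = (\<Sum>i\<in>I. i)" using assms by (simp add: card_SigmaI)
  finally show ?thesis .
qed

lemma arcsE:
  assumes "E \<in> arcs (Yplus p)"
  obtains e \<sigma> where "e \<in> X_edges p" "\<sigma> \<in> {1..<p}" "E = al p e \<sigma>"
proof -
  from assms obtain x where x: "x \<in> X_edges p \<times> {1..<p}" "E = (case x of (e, \<sigma>) \<Rightarrow> al p e \<sigma>)"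
    unfolding arcs_Y[OF pr od] by blast
  obtain e \<sigma> where xe: "x = (e, \<sigma>)" by (cases x)
  show ?thesis by (rule that[of e \<sigma>]) (use x xe in auto)
qed

lemma count_e:
  assumes s: "\<sigma> \<in> {1..<p}" and t: "\<tau> \<in> {1..<p}"
  shows "card {e \<in> X_edges p. cl p (\<sigma> * alpha p e mod p) = cl p \<tau>} = (if cl p \<sigma> = cl p \<tau> then 1 else 0) + p"
proof -
  define i0 where "i0 = \<sigma> * dinv p \<tau> mod p"
  have dt: "dinv p \<tau> \<in> {1..<p}" using dinv[OF pr od t] by auto
  have i0: "i0 \<in> {1..<p}" unfolding i0_def using mulD[OF pr od s dt] .
  define I where "I = {i0, p - i0}"
  have ID: "I \<subseteq> {1..<p}" unfolding I_def using i0 by auto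
  have ne: "i0 \<noteq> p - i0"
  proof
    assume "i0 = p - i0"
    then have "p = 2 * i0" using i0 by auto
    then show False using od by simp
  qed
  have sI: "(\<Sum>i\<in>I. i) = p" unfolding I_def using ne i0 by simp
  define A where "A = (if cl p \<sigma> = cl p \<tau> then {E0} else {})"
  define B where "B = {Eik i k | i k. i \<in> I \<and> 1 \<le> k \<and> k \<le> i}"
  have "{e \<in> X_edges p. cl p (\<sigma> * alpha p e mod p) = cl p \<tau>} = A \<union> B"
  proof (rule set_eqI)
    fix e
    show "e \<in> {e \<in> X_edges p. cl p (\<sigma> * alpha p e mod p) = cl p \<tau>} \<longleftrightarrow> e \<in> A \<union> B"
    proof (cases e)
      case E0
      then show ?thesis unfolding A_def B_def X_edges_def alpha_def using s by auto
    next
      case (Eik i k)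
      show ?thesis
      proof
        assume h: "e \<in> {e \<in> X_edges p. cl p (\<sigma> * alpha p e mod p) = cl p \<tau>}"
        then have ik: "1 \<le> k" "k \<le> i" "i \<le> p - 1" unfolding Eik X_edges_def by auto
        then have iD: "i \<in> {1..<p}" using p3[OF pr od] by auto
        have "cl p (\<sigma> * dinv p i mod p) = cl p \<tau>" using h unfolding Eik alpha_def by simp
        then have "i \<in> I" unfolding I_def using Qlemma[OF pr od s t iD] i0_def by simp
        then show "e \<in> A \<union> B" unfolding B_def Eik using ik by auto
      next
        assume "e \<in> A \<union> B"
        then have "e \<in> B" unfolding A_def Eik by (auto split: if_splits)
        then have ik: "i \<in> I" "1 \<le> k" "k \<le> i" unfolding B_def Eik by auto
        then have iD: "i \<in> {1..<p}" using ID by auto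
        have "cl p (\<sigma> * dinv p i mod p) = cl p \<tau>"
          using Qlemma[OF pr od s t iD] ik(1) unfolding I_def i0_def by auto
        then show "e \<in> {e \<in> X_edges p. cl p (\<sigma> * alpha p e mod p) = cl p \<tau>}"
          unfolding Eik X_edges_def alpha_def using ik iD by auto
      qed
    qed
  qed
  moreover have "A \<inter> B = {}" unfolding A_def B_def by auto
  moreover have "finite A" unfolding A_def by simp
  moreover have "finite B"
  proof -
    have "B \<subseteq> X_edges p" unfolding B_def X_edges_def using ID by fastforce
    then show ?thesis using X_fin finite_subset by blast
  qed
  moreover have "card A = (if cl p \<sigma> = cl p \<tau> then 1 else 0)" unfolding A_def by simp
  moreover have "card B = p" unfolding B_def using card_Eik[of I] sI I_def by simp
  ultimately show ?thesis by (simp add: card_Un_disjoint)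
qed

lemma arcs_count:
  assumes w: "w \<in> verts (Yplus p)" and v: "v \<in> verts (Yplus p)"
  shows "card {E \<in> arcs (Yplus p). tail (Yplus p) E = w \<and> head (Yplus p) E = v} = (if w = v then 1 else 0) + p"
proof -
  obtain \<sigma> where s: "\<sigma> \<in> {1..<p}" and ws: "w = cl p \<sigma>" using w verts_Y[OF pr od] by auto
  obtain \<tau> where t: "\<tau> \<in> {1..<p}" and vt: "v = cl p \<tau>" using v verts_Y[OF pr od] by auto
  have "{E \<in> arcs (Yplus p). tail (Yplus p) E = w \<and> head (Yplus p) E = v}
      = (\<lambda>e. al p e \<sigma>) ` {e \<in> X_edges p. cl p (\<sigma> * alpha p e mod p) = cl p \<tau>}"
  proof
    show "{E \<in> arcs (Yplus p). tail (Yplus p) E = w \<and> head (Yplus p) E = v}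
      \<subseteq> (\<lambda>e. al p e \<sigma>) ` {e \<in> X_edges p. cl p (\<sigma> * alpha p e mod p) = cl p \<tau>}"
    proof
      fix E assume E: "E \<in> {E \<in> arcs (Yplus p). tail (Yplus p) E = w \<and> head (Yplus p) E = v}"
      then have "E \<in> arcs (Yplus p)" by simp
      then obtain e \<sigma>' where e: "e \<in> X_edges p" and s': "\<sigma>' \<in> {1..<p}" and Ee: "E = al p e \<sigma>'"
        by (rule arcsE)
      have "cl p \<sigma>' = cl p \<sigma>" using E tail_Y[OF pr od e s'] Ee ws by simp
      then have "\<sigma>' = \<sigma> \<or> \<sigma>' + \<sigma> = p" using cl_eq[OF pr od s' s] by simp
      then have Ee2: "E = al p e \<sigma>" unfolding Ee al_def by auto
      then have "cl p (\<sigma> * alpha p e mod p) = cl p \<tau>" using E head_Y[OF pr od e s] vt by simp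
      then show "E \<in> (\<lambda>e. al p e \<sigma>) ` {e \<in> X_edges p. cl p (\<sigma> * alpha p e mod p) = cl p \<tau>}"
        using Ee2 e by blast
    qed
  next
    show "(\<lambda>e. al p e \<sigma>) ` {e \<in> X_edges p. cl p (\<sigma> * alpha p e mod p) = cl p \<tau>}
      \<subseteq> {E \<in> arcs (Yplus p). tail (Yplus p) E = w \<and> head (Yplus p) E = v}"
    proof
      fix E assume "E \<in> (\<lambda>e. al p e \<sigma>) ` {e \<in> X_edges p. cl p (\<sigma> * alpha p e mod p) = cl p \<tau>}"
      then obtain e where e: "e \<in> X_edges p" "cl p (\<sigma> * alpha p e mod p) = cl p \<tau>" and Ee: "E = al p e \<sigma>"
        by blast
      have "E \<in> arcs (Yplus p)" unfolding arcs_Y[OF pr od] Ee using e s by force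
      then show "E \<in> {E \<in> arcs (Yplus p). tail (Yplus p) E = w \<and> head (Yplus p) E = v}"
        using tail_Y[OF pr od e(1) s] head_Y[OF pr od e(1) s] e ws vt Ee by simp
    qed
  qed
  moreover have "inj_on (\<lambda>e. al p e \<sigma>) X"  for X
    unfolding al_def inj_on_def by (metis Pair_inject insertE insertI1 singletonD)
  ultimately have "card {E \<in> arcs (Yplus p). tail (Yplus p) E = w \<and> head (Yplus p) E = v}
      = card {e \<in> X_edges p. cl p (\<sigma> * alpha p e mod p) = cl p \<tau>}"
    by (simp add: card_image)
  also have "\<dots> = (if w = v then 1 else 0) + p" using count_e[OF s t] ws vt by simp
  finally show ?thesis .
qed

lemma card_verts: "card (verts (Yplus p)) = (p - 1) div 2"
proof -
  define h where "h = (p - 1) div 2"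
  obtain m where m: "p = 2 * m + 1" using od by (rule oddE)
  have ph: "p = 2 * h + 1" unfolding h_def using m by simp
  have "cl p ` {1..<p} = cl p ` {1..h}"
  proof
    show "cl p ` {1..h} \<subseteq> cl p ` {1..<p}" using ph by auto
    show "cl p ` {1..<p} \<subseteq> cl p ` {1..h}"
    proof
      fix c assume "c \<in> cl p ` {1..<p}"
      then obtain \<sigma> where s: "\<sigma> \<in> {1..<p}" and c: "c = cl p \<sigma>" by blast
      show "c \<in> cl p ` {1..h}"
      proof (cases "\<sigma> \<le> h")
        case True then show ?thesis using s c by auto
      next
        case False
        then have "p - \<sigma> \<in> {1..h}" using s ph by auto
        moreover have "c = cl p (p - \<sigma>)" using cl_neg[OF pr od s] c by simp
        ultimately show ?thesis by blast
      qed
    qed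
  qed
  moreover have "inj_on (cl p) {1..h}"
  proof
    fix a b assume a: "a \<in> {1..h}" and b: "b \<in> {1..h}" and e: "cl p a = cl p b"
    have "a \<in> {1..<p}" "b \<in> {1..<p}" using a b ph by auto
    then have "a = b \<or> a + b = p" using cl_eq[OF pr od] e by blast
    then show "a = b" using a b ph by auto
  qed
  ultimately show ?thesis unfolding verts_Y[OF pr od] h_def by (simp add: card_image)
qed

lemma is_qgraph: "qgraph (Yplus p) p"
proof
  show "finite (verts (Yplus p))" unfolding verts_Y[OF pr od] by simp
  show "finite (arcs (Yplus p))" unfolding arcs_Y[OF pr od] using X_fin by simp
  show "verts (Yplus p) \<noteq> {}" unfolding verts_Y[OF pr od] using p3[OF pr od] by auto
  show "tail (Yplus p) E \<in> verts (Yplus p)" if EA: "E \<in> arcs (Yplus p)" for E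
  proof -
    obtain e \<sigma> where e: "e \<in> X_edges p" and s: "\<sigma> \<in> {1..<p}" and Ee: "E = al p e \<sigma>"
      using EA by (rule arcsE)
    show ?thesis unfolding Ee tail_Y[OF pr od e s] verts_Y[OF pr od] using s by blast
  qed
  show "head (Yplus p) E \<in> verts (Yplus p)" if EA: "E \<in> arcs (Yplus p)" for E
  proof -
    obtain e \<sigma> where e: "e \<in> X_edges p" and s: "\<sigma> \<in> {1..<p}" and Ee: "E = al p e \<sigma>"
      using EA by (rule arcsE)
    have "\<sigma> * alpha p e mod p \<in> {1..<p}" using mulD[OF pr od s alphaD[OF pr od e]] .
    then show ?thesis unfolding Ee head_Y[OF pr od e s] verts_Y[OF pr od] by blast
  qed
  show "card {E \<in> arcs (Yplus p). tail (Yplus p) E = w \<and> head (Yplus p) E = v} = (if w = v then 1 else 0) + p"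
    if "w \<in> verts (Yplus p)" "v \<in> verts (Yplus p)" for w v
    using arcs_count[OF that] .
  show "p > 0" using p3[OF pr od] by simp
qed

end

theorem corollary5p5:
  fixes p :: nat
  assumes "prime p" and "odd p"
  shows "r_ord (Yplus p) = BF_rank (Yplus p)
    \<and> mval (Yplus p) = (-1) ^ ((p - 1) div 2) * of_nat ((p - 1) div 2)
    \<and> card (BF_tors (Yplus p)) = p
    \<and> gstar (Yplus p) = (-1) ^ ((p - 1) div 2) * int ((p - 1) div 2) * int p"
proof -
  interpret Q: qgraph "Yplus p" p using is_qgraph[OF assms] .
  have n: "card (verts (Yplus p)) = (p - 1) div 2" using card_verts[OF assms] .
  have r: "r_ord (Yplus p) = (p - 1) div 2 - 1" and g: "gstar (Yplus p) = (-1) ^ ((p - 1) div 2) * int ((p - 1) div 2) * int p"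
    using Q.r_gstar n by auto
  have rk: "BF_rank (Yplus p) = (p - 1) div 2 - 1" using Q.rank n by simp
  have t: "card (BF_tors (Yplus p)) = p" using Q.tors_card .
  have p0: "p > 0" using assms prime_gt_0_nat by blast
  have "mval (Yplus p) = of_int ((-1) ^ ((p - 1) div 2) * int ((p - 1) div 2) * int p) / of_nat p"
    unfolding mval_def g t ..
  also have "\<dots> = (-1) ^ ((p - 1) div 2) * of_nat ((p - 1) div 2)" using p0 by simp
  finally show ?thesis using r rk t g by simp
qed


end
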